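(* Assume $W$ satisfies conditions (i) and (ii) below on $[0,T]$. Then for every integer $r\ge1$ there is a constant $C$ such that for all $n\ge1$ and $0\le t\le T$, $$\sum_{j,k=1}^{\lfloor nt/2\rfloor}\Big(|\beta_n(2j-1,2k-1)|^r+|\beta_n(2j-1,2k-2)|^r+|\beta_n(2j-2,2k-1)|^r+|\beta_n(2j-2,2k-2)|^r\Big)\le C\Big\lfloor\frac{nt}{2}\Big\rfloor n^{-r/2}.$$
   Context: $W=\{W_t,t\ge0\}$ is a centered Gaussian process with continuous covariance. For integers $j,k\ge0$, $n\ge1$: $\beta_n(j,k)=\mathbb E[(W_{(j+1)/n}-W_{j/n})(W_{(k+1)/n}-W_{k/n})]$. Fix $T>0$. Condition (i): there is $C_1$ such that $\mathbb E[(W_t-W_{t-s})^2]\le C_1 s^{1/2}$ for all $0<s\le t\le T$. Condition (ii): there are constants $C_1$ and $1<\alpha\le 3/2$, $\beta=\tfrac32-\alpha$, such that for all $s>0$ and $2s\le r,t\le T$ with $|t-r|\ge2s$: $|\mathbb E[(W_t-W_{t-s})(W_r-W_{r-s})]|\le C_1s^2|t-r|^{-\alpha}(t\wedge r-s)^{-\beta}+C_1s^2|t-r|^{-3/2}$. *)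

theory Defs
  imports "HOL-Probability.Probability"
begin

definition centered_gaussian_process :: "'a measure \<Rightarrow> (real \<Rightarrow> 'a \<Rightarrow> real) \<Rightarrow> bool" where
  "centered_gaussian_process M W \<longleftrightarrow>
     prob_space M \<and> (\<forall>t\<ge>0. W t \<in> borel_measurable M) \<and>
     (\<forall>(ts :: real list) (cs :: real list). length ts = length cs \<longrightarrow> (\<forall>t\<in>set ts. t \<ge> 0) \<longrightarrow>
        (let X = (\<lambda>\<omega>. \<Sum>i<length ts. cs ! i * W (ts ! i) \<omega>) in
          (AE \<omega> in M. X \<omega> = 0) \<or>
          (\<exists>\<sigma>>0. distributed M lborel X (normal_density 0 \<sigma>))))"

definition cov_fun :: "'a measure \<Rightarrow> (real \<Rightarrow> 'a \<Rightarrow> real) \<Rightarrow> real \<Rightarrow> real \<Rightarrow> real" where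
  "cov_fun M W s t = (\<integral>\<omega>. W s \<omega> * W t \<omega> \<partial>M)"

definition beta :: "'a measure \<Rightarrow> (real \<Rightarrow> 'a \<Rightarrow> real) \<Rightarrow> nat \<Rightarrow> nat \<Rightarrow> nat \<Rightarrow> real" where
  "beta M W n j k = (\<integral>\<omega>. (W (real (j+1) / real n) \<omega> - W (real j / real n) \<omega>) *
                          (W (real (k+1) / real n) \<omega> - W (real k / real n) \<omega>) \<partial>M)"

definition cond_i :: "'a measure \<Rightarrow> (real \<Rightarrow> 'a \<Rightarrow> real) \<Rightarrow> real \<Rightarrow> bool" where
  "cond_i M W T \<longleftrightarrow> (\<exists>C1::real. \<forall>s t. 0 < s \<and> s \<le> t \<and> t \<le> T \<longrightarrow>
      (\<integral>\<omega>. (W t \<omega> - W (t - s) \<omega>)\<^sup>2 \<partial>M) \<le> C1 * s powr (1/2))"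

text \<open>Condition (ii) on [0,T], with beta = 3/2 - alpha.\<close>
definition cond_ii :: "'a measure \<Rightarrow> (real \<Rightarrow> 'a \<Rightarrow> real) \<Rightarrow> real \<Rightarrow> bool" where
  "cond_ii M W T \<longleftrightarrow> (\<exists>C1::real. \<exists>\<alpha>::real. 1 < \<alpha> \<and> \<alpha> \<le> 3/2 \<and>
     (\<forall>s r t. 0 < s \<and> 2 * s \<le> r \<and> r \<le> T \<and> 2 * s \<le> t \<and> t \<le> T \<and> \<bar>t - r\<bar> \<ge> 2 * s \<longrightarrow>
        \<bar>(\<integral>\<omega>. (W t \<omega> - W (t - s) \<omega>) * (W r \<omega> - W (r - s) \<omega>) \<partial>M)\<bar>
          \<le> C1 * s\<^sup>2 * \<bar>t - r\<bar> powr (-\<alpha>) * (min t r - s) powr (-(3/2 - \<alpha>))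
             + C1 * s\<^sup>2 * \<bar>t - r\<bar> powr (-3/2)))"

end

theory Submission
  imports Defs
begin


lemma incr_sq_integrable:
  assumes G: "centered_gaussian_process M W" and u: "0 \<le> u" and v: "0 \<le> v"
  shows "integrable M (\<lambda>\<omega>. (W u \<omega> - W v \<omega>)^2)"
proof -
  have ps: "prob_space M" and meas: "\<And>t. t \<ge> 0 \<Longrightarrow> W t \<in> borel_measurable M"
    using G unfolding centered_gaussian_process_def by auto
  have Wu[measurable]: "W u \<in> borel_measurable M" using meas u by auto
  have Wv[measurable]: "W v \<in> borel_measurable M" using meas v by auto
  have "(AE \<omega> in M. (\<lambda>\<omega>. \<Sum>i<length [u,v]. [1,-1] ! i * W ([u,v] ! i) \<omega>) \<omega> = 0) \<or>
          (\<exists>\<sigma>>0. distributed M lborel (\<lambda>\<omega>. \<Sum>i<length [u,v]. [1,-1] ! i * W ([u,v] ! i) \<omega>) (normal_density 0 \<sigma>))"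
  proof -
    have "\<forall>(ts :: real list) (cs :: real list). length ts = length cs \<longrightarrow> (\<forall>t\<in>set ts. t \<ge> 0) \<longrightarrow>
        (let X = (\<lambda>\<omega>. \<Sum>i<length ts. cs ! i * W (ts ! i) \<omega>) in
          (AE \<omega> in M. X \<omega> = 0) \<or>
          (\<exists>\<sigma>>0. distributed M lborel X (normal_density 0 \<sigma>)))"
      using G unfolding centered_gaussian_process_def by blast
    from this[rule_format, of "[u,v]" "[1,-1]"] show ?thesis using u v by (auto simp: Let_def)
  qed
  moreover have eq: "(\<lambda>\<omega>. \<Sum>i<length [u,v]. [1::real,-1] ! i * W ([u,v] ! i) \<omega>) = (\<lambda>\<omega>. W u \<omega> - W v \<omega>)"
    by (simp add: numeral_2_eq_2)
  ultimately have H: "(AE \<omega> in M. W u \<omega> - W v \<omega> = 0) \<or>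
          (\<exists>\<sigma>>0. distributed M lborel (\<lambda>\<omega>. W u \<omega> - W v \<omega>) (normal_density 0 \<sigma>))"
    by simp
  show ?thesis
  proof (cases "AE \<omega> in M. W u \<omega> - W v \<omega> = 0")
    case True
    have "integrable M (\<lambda>\<omega>. (W u \<omega> - W v \<omega>)^2) \<longleftrightarrow> integrable M (\<lambda>\<omega>. 0::real)"
      by (rule integrable_cong_AE) (use True in auto)
    then show ?thesis by simp
  next
    case False
    then obtain \<sigma> where sg: "\<sigma> > 0" and D: "distributed M lborel (\<lambda>\<omega>. W u \<omega> - W v \<omega>) (normal_density 0 \<sigma>)"
      using H by auto
    have "integrable lborel (\<lambda>x. normal_density 0 \<sigma> x * (\<lambda>x. x^2) x)"
    proof -
      have "integrable lborel (\<lambda>x. normal_density 0 \<sigma> x * (x - 0)^2)" using sg by (rule integrable_normal_moment)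
      then show ?thesis by simp
    qed
    then show ?thesis
      using distributed_integrable[OF D, of "\<lambda>x. x^2"] by (simp add: normal_density_nonneg)
  qed
qed

lemma incr_prod_bound:
  assumes G: "centered_gaussian_process M W" and "0 \<le> u" "0 \<le> v" "0 \<le> p" "0 \<le> q"
    and b1: "(\<integral>\<omega>. (W u \<omega> - W v \<omega>)^2 \<partial>M) \<le> A"
    and b2: "(\<integral>\<omega>. (W p \<omega> - W q \<omega>)^2 \<partial>M) \<le> A"
  shows "\<bar>\<integral>\<omega>. (W u \<omega> - W v \<omega>) * (W p \<omega> - W q \<omega>) \<partial>M\<bar> \<le> A"
proof -
  have meas: "\<And>t. t \<ge> 0 \<Longrightarrow> W t \<in> borel_measurable M"
    using G unfolding centered_gaussian_process_def by auto
  have [measurable]: "W u \<in> borel_measurable M" "W v \<in> borel_measurable M"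
     "W p \<in> borel_measurable M" "W q \<in> borel_measurable M" using meas assms by auto
  have I1: "integrable M (\<lambda>\<omega>. (W u \<omega> - W v \<omega>)^2)" by (rule incr_sq_integrable) (use assms in auto)
  have I2: "integrable M (\<lambda>\<omega>. (W p \<omega> - W q \<omega>)^2)" by (rule incr_sq_integrable) (use assms in auto)
  have I3: "integrable M (\<lambda>\<omega>. ((W u \<omega> - W v \<omega>)^2 + (W p \<omega> - W q \<omega>)^2) / 2)"
    using I1 I2 by auto
  have pt: "\<And>x y::real. \<bar>x * y\<bar> * 2 \<le> x^2 + y^2"
  proof -
    fix x y :: real
    have "0 \<le> (\<bar>x\<bar> - \<bar>y\<bar>)^2" by simp
    then show "\<bar>x * y\<bar> * 2 \<le> x^2 + y^2" by (simp add: power2_eq_square abs_mult algebra_simps)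
  qed
  have pt2: "\<And>x y::real. norm (x*y) \<le> norm ((x^2+y^2)/2)"
  proof -
    fix x y :: real
    have "\<bar>x*y\<bar> \<le> (x^2+y^2)/2" using pt[of x y] by (simp add: le_divide_eq)
    moreover have "0 \<le> (x^2+y^2)/2" by simp
    ultimately show "norm (x*y) \<le> norm ((x^2+y^2)/2)" by simp
  qed
  have I4: "integrable M (\<lambda>\<omega>. (W u \<omega> - W v \<omega>) * (W p \<omega> - W q \<omega>))"
    by (rule Bochner_Integration.integrable_bound[OF I3], measurable, rule AE_I2, rule pt2)
  have "\<bar>\<integral>\<omega>. (W u \<omega> - W v \<omega>) * (W p \<omega> - W q \<omega>) \<partial>M\<bar>
      \<le> (\<integral>\<omega>. \<bar>(W u \<omega> - W v \<omega>) * (W p \<omega> - W q \<omega>)\<bar> \<partial>M)"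
    by (rule integral_abs_bound)
  also have "\<dots> \<le> (\<integral>\<omega>. ((W u \<omega> - W v \<omega>)^2 + (W p \<omega> - W q \<omega>)^2) / 2 \<partial>M)"
    by (rule integral_mono[OF _ I3]) (use I4 pt in auto)
  also have "\<dots> = ((\<integral>\<omega>. (W u \<omega> - W v \<omega>)^2 \<partial>M) + (\<integral>\<omega>. (W p \<omega> - W q \<omega>)^2 \<partial>M)) / 2"
    using I1 I2 by simp
  also have "\<dots> \<le> A" using b1 b2 by simp
  finally show ?thesis .
qed


lemma powr_bound:
  fixes n d m C \<alpha> :: real
  assumes n: "n \<ge> 1" and d: "d \<ge> 1" and m: "m \<ge> 1/n" and a1: "1 < \<alpha>" and a2: "\<alpha> \<le> 3/2"
  shows "C * (1/n)\<^sup>2 * (d/n) powr (-\<alpha>) * m powr (-(3/2-\<alpha>)) + C*(1/n)\<^sup>2*(d/n) powr (-3/2)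
     \<le> 2*\<bar>C\<bar> * n powr (-1/2) * d powr (-\<alpha>)"
proof -
  have np: "n > 0" using n by simp
  have e1: "(d/n) powr (-\<alpha>) = d powr (-\<alpha>) * n powr \<alpha>"
    using np d by (simp add: powr_divide powr_minus divide_simps)
  have e2: "(d/n) powr (-3/2) = d powr (-3/2) * n powr (3/2)"
    using np d by (simp add: powr_divide powr_minus divide_simps)
  have m1: "m powr (-(3/2-\<alpha>)) \<le> (1/n) powr (-(3/2-\<alpha>))"
    by (rule powr_mono2') (use a2 np m in auto)
  have e3: "(1/n) powr (-(3/2-\<alpha>)) = n powr (3/2-\<alpha>)"
    using np by (simp add: powr_divide powr_minus divide_simps)
  have e4: "(1/n)\<^sup>2 = n powr (-2)"
    using np by (simp add: powr_minus divide_simps powr_realpow)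
  have d1: "d powr (-3/2) \<le> d powr (-\<alpha>)"
    by (rule powr_mono) (use a2 d in auto)
  have X: "(1/n)\<^sup>2 * (d/n) powr (-\<alpha>) * m powr (-(3/2-\<alpha>)) \<le> n powr (-1/2) * d powr (-\<alpha>)"
  proof -
    have "(1/n)\<^sup>2 * (d/n) powr (-\<alpha>) * m powr (-(3/2-\<alpha>)) \<le> (1/n)\<^sup>2 * (d/n) powr (-\<alpha>) * n powr (3/2-\<alpha>)"
      using m1 e3 by (intro mult_left_mono) auto
    also have "\<dots> = d powr (-\<alpha>) * (n powr (-2) * n powr \<alpha> * n powr (3/2-\<alpha>))"
      using e1 e4 by simp
    also have "n powr (-2) * n powr \<alpha> * n powr (3/2-\<alpha>) = n powr (-1/2)"
      by (simp add: powr_add[symmetric])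
    finally show ?thesis by (simp add: mult.commute)
  qed
  have Y: "(1/n)\<^sup>2*(d/n) powr (-3/2) \<le> n powr (-1/2) * d powr (-\<alpha>)"
  proof -
    have "(1/n)\<^sup>2*(d/n) powr (-3/2) = d powr (-3/2) * (n powr (-2) * n powr (3/2))"
      using e2 e4 by simp
    also have "n powr (-2) * n powr (3/2) = n powr (-1/2)"
      by (simp add: powr_add[symmetric])
    finally have "(1/n)\<^sup>2*(d/n) powr (-3/2) = d powr (-3/2) * n powr (-1/2)" .
    also have "\<dots> \<le> d powr (-\<alpha>) * n powr (-1/2)"
      using d1 by (intro mult_right_mono) auto
    finally show ?thesis by (simp add: mult.commute)
  qed
  have X0: "0 \<le> (1/n)\<^sup>2 * (d/n) powr (-\<alpha>) * m powr (-(3/2-\<alpha>))" by simp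
  have Y0: "0 \<le> (1/n)\<^sup>2*(d/n) powr (-3/2)" by simp
  have "C * ((1/n)\<^sup>2 * (d/n) powr (-\<alpha>) * m powr (-(3/2-\<alpha>))) \<le> \<bar>C\<bar> * (n powr (-1/2) * d powr (-\<alpha>))"
    by (rule order_trans[OF mult_right_mono[OF abs_ge_self X0]]) (intro mult_left_mono X, simp)
  moreover have "C * ((1/n)\<^sup>2*(d/n) powr (-3/2)) \<le> \<bar>C\<bar> * (n powr (-1/2) * d powr (-\<alpha>))"
    by (rule order_trans[OF mult_right_mono[OF abs_ge_self Y0]]) (intro mult_left_mono Y, simp)
  ultimately show ?thesis by (simp add: mult.assoc)
qed


lemma summable_e: "1 < \<alpha> \<Longrightarrow> summable (\<lambda>d::nat. (1 + real d) powr (-\<alpha>))"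
proof -
  assume "1 < \<alpha>"
  then have "summable (\<lambda>d::nat. real d powr (-\<alpha>))" by (simp add: summable_real_powr_iff)
  then have "summable (\<lambda>d::nat. real (Suc d) powr (-\<alpha>))" by (subst summable_Suc_iff)
  then show ?thesis by (simp add: add.commute)
qed

lemma row_sum:
  assumes a: "1 < \<alpha>"
  shows "(\<Sum>k\<in>{1..N::nat}. (1 + \<bar>real j - real k\<bar>) powr (-\<alpha>)) \<le> 2 * (\<Sum>d. (1 + real d) powr (-\<alpha>))"
proof -
  define e where "e = (\<lambda>d::nat. (1 + real d) powr (-\<alpha>))"
  have se: "summable e" unfolding e_def by (rule summable_e[OF a])
  define A where "A = {1..N} \<inter> {..j}"
  define B where "B = {1..N} - {..j}"
  have fin: "finite A" "finite B" unfolding A_def B_def by auto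
  have "(\<Sum>k\<in>{1..N::nat}. (1 + \<bar>real j - real k\<bar>) powr (-\<alpha>)) =
        (\<Sum>k\<in>A. (1 + \<bar>real j - real k\<bar>) powr (-\<alpha>)) + (\<Sum>k\<in>B. (1 + \<bar>real j - real k\<bar>) powr (-\<alpha>))"
    unfolding A_def B_def by (rule sum.Int_Diff) auto
  also have "(\<Sum>k\<in>A. (1 + \<bar>real j - real k\<bar>) powr (-\<alpha>)) = (\<Sum>k\<in>A. e (j - k))"
    by (rule sum.cong) (auto simp: A_def e_def of_nat_diff)
  also have "\<dots> = sum e ((\<lambda>k. j - k) ` A)"
    by (rule sum.reindex[symmetric, unfolded comp_def]) (auto simp: inj_on_def A_def)
  also have "\<dots> \<le> suminf e"
    by (rule sum_le_suminf[OF se]) (use fin in \<open>auto simp: e_def\<close>)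
  also have "(\<Sum>k\<in>B. (1 + \<bar>real j - real k\<bar>) powr (-\<alpha>)) = (\<Sum>k\<in>B. e (k - j))"
    by (rule sum.cong) (auto simp: B_def e_def of_nat_diff)
  also have "\<dots> = sum e ((\<lambda>k. k - j) ` B)"
    by (rule sum.reindex[symmetric, unfolded comp_def]) (auto simp: inj_on_def B_def)
  also have "\<dots> \<le> suminf e"
    by (rule sum_le_suminf[OF se]) (use fin in \<open>auto simp: e_def\<close>)
  finally show ?thesis unfolding e_def by simp
qed

lemma H_sum:
  assumes a: "1 < \<alpha>" and c: "0 \<le> c"
  shows "(\<Sum>j\<in>{1..N::nat}. \<Sum>k\<in>{1..N}. (if j = 1 then 1 else 0) + (if k = 1 then 1 else 0)
           + c * (1 + \<bar>real j - real k\<bar>) powr (-\<alpha>))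
         \<le> real N * (2 + 2 * c * (\<Sum>d. (1 + real d) powr (-\<alpha>)))"
proof -
  let ?S = "\<Sum>d. (1 + real d) powr (-\<alpha>)"
  have "(\<Sum>j\<in>{1..N::nat}. \<Sum>k\<in>{1..N}. (if j = 1 then 1 else 0) + (if k = 1 then 1 else 0)
           + c * (1 + \<bar>real j - real k\<bar>) powr (-\<alpha>))
       \<le> (\<Sum>j\<in>{1..N::nat}. (if j = 1 then real N else 0) + 1 + 2 * c * ?S)"
  proof (rule sum_mono)
    fix j assume j: "j \<in> {1..N}"
    have "(\<Sum>k\<in>{1..N}. (if j = 1 then 1 else 0) + (if k = 1 then 1 else 0)
           + c * (1 + \<bar>real j - real k\<bar>) powr (-\<alpha>)) =
          (\<Sum>k\<in>{1..N}. (if j = 1 then 1 else 0)) + (\<Sum>k\<in>{1..N}. (if k = 1 then 1 else 0::real))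
           + c * (\<Sum>k\<in>{1..N}. (1 + \<bar>real j - real k\<bar>) powr (-\<alpha>))"
      by (simp add: sum.distrib sum_distrib_left)
    also have "\<dots> \<le> (if j = 1 then real N else 0) + 1 + c * (2 * ?S)"
    proof -
      have s1: "(\<Sum>k\<in>{1..N}. (if j = 1 then 1 else 0::real)) = (if j = 1 then real N else 0)" by simp
      have s2: "(\<Sum>k\<in>{1..N}. (if k = 1 then 1 else 0::real)) \<le> 1"
        using j by (simp add: sum.delta)
      have s3: "c * (\<Sum>k\<in>{1..N}. (1 + \<bar>real j - real k\<bar>) powr (-\<alpha>)) \<le> c * (2 * ?S)"
        by (rule mult_left_mono[OF row_sum[OF a] c])
      show ?thesis using s1 s2 s3 by linarith
    qed
    finally show "(\<Sum>k\<in>{1..N}. (if j = 1 then 1 else 0) + (if k = 1 then 1 else 0)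
           + c * (1 + \<bar>real j - real k\<bar>) powr (-\<alpha>)) \<le> (if j = 1 then real N else 0) + 1 + 2 * c * ?S"
      by simp
  qed
  also have "\<dots> = (\<Sum>j\<in>{1..N::nat}. (if j = 1 then real N else 0)) + real N * (1 + 2 * c * ?S)"
    by (simp add: sum.distrib algebra_simps)
  also have "\<dots> \<le> real N * (2 + 2 * c * ?S)"
  proof -
    have "(\<Sum>j\<in>{1..N::nat}. (if j = 1 then real N else 0)) \<le> real N"
      by (simp add: sum.delta)
    then show ?thesis by (simp add: algebra_simps)
  qed
  finally show ?thesis .
qed


definition gfun :: "real \<Rightarrow> nat \<Rightarrow> nat \<Rightarrow> real" where
 "gfun \<alpha> a b = (if a = 0 \<or> b = 0 \<or> \<bar>real a - real b\<bar> \<le> 1 then 1 else \<bar>real a - real b\<bar> powr (-\<alpha>))"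

lemma gfun_nonneg: "0 \<le> gfun \<alpha> a b" by (simp add: gfun_def)

lemma powr_neg_le1: "0 \<le> \<alpha> \<Longrightarrow> 1 \<le> (x::real) \<Longrightarrow> x powr (-\<alpha>) \<le> 1"
proof -
  assume "0 \<le> \<alpha>" "1 \<le> x"
  then have "x powr (-\<alpha>) \<le> x powr 0" by (intro powr_mono) auto
  then show ?thesis using \<open>1 \<le> x\<close> by simp
qed

lemma gfun_le1: "0 \<le> \<alpha> \<Longrightarrow> gfun \<alpha> a b \<le> 1"
  unfolding gfun_def by (auto intro!: powr_neg_le1)

lemma g_le_H:
  assumes a: "1 < \<alpha>" and j: "1 \<le> j" and k: "1 \<le> k"
    and ab: "a \<in> {2*j-1, 2*j-2}" "b \<in> {2*k-1, 2*k-2}"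
  shows "gfun \<alpha> a b \<le> (if j=1 then 1 else 0) + (if k=1 then 1 else 0) + 2 powr \<alpha> * (1 + \<bar>real j - real k\<bar>) powr (-\<alpha>)"
proof -
  have g1: "gfun \<alpha> a b \<le> 1" using a by (intro gfun_le1) auto
  have p0: "0 \<le> 2 powr \<alpha> * (1 + \<bar>real j - real k\<bar>) powr (-\<alpha>)" by simp
  show ?thesis
  proof (cases "j = 1 \<or> k = 1")
    case True
    then have "1 \<le> (if j=1 then 1 else 0) + (if k=1 then 1 else (0::real))" by auto
    then show ?thesis using g1 p0 by linarith
  next
    case False
    then have j2: "j \<ge> 2" and k2: "k \<ge> 2" using j k by auto
    then have a0: "a \<noteq> 0" and b0: "b \<noteq> 0" using ab by auto
    show ?thesis
    proof (cases "\<bar>real j - real k\<bar> \<le> 1")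
      case True
      have "(1 + \<bar>real j - real k\<bar>) powr (-\<alpha>) \<ge> 2 powr (-\<alpha>)"
        by (rule powr_mono2') (use a True in auto)
      then have "2 powr \<alpha> * (1 + \<bar>real j - real k\<bar>) powr (-\<alpha>) \<ge> 2 powr \<alpha> * 2 powr (-\<alpha>)"
        by (intro mult_left_mono) auto
      also have "2 powr \<alpha> * 2 powr (-\<alpha>) = (1::real)" by (simp add: powr_add[symmetric])
      finally show ?thesis using g1 False by auto
    next
      case c2: False
      have ra: "real a \<in> {2*real j-1, 2*real j-2}" and rb: "real b \<in> {2*real k-1, 2*real k-2}"
        using ab j k by (auto simp: of_nat_diff)
      have jk: "real j \<ge> real k + 2 \<or> real k \<ge> real j + 2"
      proof -
        have "j \<ge> k+2 \<or> k \<ge> j+2"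
        proof (rule ccontr)
          assume "\<not> (j \<ge> k+2 \<or> k \<ge> j+2)"
          then have "j \<le> k+1" "k \<le> j+1" by auto
          then have "real j \<le> real k+1" "real k \<le> real j+1" by linarith+
          then have "\<bar>real j - real k\<bar> \<le> 1" by linarith
          with c2 show False by simp
        qed
        then show ?thesis by linarith
      qed
      have dd: "\<bar>real a - real b\<bar> \<ge> 1 + \<bar>real j - real k\<bar>"
        using ra rb jk by auto
      then have gd: "gfun \<alpha> a b = \<bar>real a - real b\<bar> powr (-\<alpha>)"
        using c2 a0 b0 by (auto simp: gfun_def)
      have "\<bar>real a - real b\<bar> powr (-\<alpha>) \<le> (1 + \<bar>real j - real k\<bar>) powr (-\<alpha>)"
        by (rule powr_mono2') (use a dd in auto)
      also have "\<dots> \<le> 2 powr \<alpha> * (1 + \<bar>real j - real k\<bar>) powr (-\<alpha>)"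
      proof -
        have "1 \<le> (2::real) powr \<alpha>" using a by (simp add: ge_one_powr_ge_zero)
        then show ?thesis by (simp add: mult_le_cancel_right1)
      qed
      finally show ?thesis using gd False by auto
    qed
  qed
qed

lemma beta_bound:
  fixes M :: "'a measure" and W :: "real \<Rightarrow> 'a \<Rightarrow> real"
  assumes G: "centered_gaussian_process M W"
    and ci: "\<forall>s t. 0 < s \<and> s \<le> t \<and> t \<le> T \<longrightarrow>
      (\<integral>\<omega>. (W t \<omega> - W (t - s) \<omega>)\<^sup>2 \<partial>M) \<le> C1 * s powr (1/2)"
    and cii: "\<forall>s r t. 0 < s \<and> 2 * s \<le> r \<and> r \<le> T \<and> 2 * s \<le> t \<and> t \<le> T \<and> \<bar>t - r\<bar> \<ge> 2 * s \<longrightarrow>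
        \<bar>(\<integral>\<omega>. (W t \<omega> - W (t - s) \<omega>) * (W r \<omega> - W (r - s) \<omega>) \<partial>M)\<bar>
          \<le> C2 * s\<^sup>2 * \<bar>t - r\<bar> powr (-\<alpha>) * (min t r - s) powr (-(3/2 - \<alpha>))
             + C2 * s\<^sup>2 * \<bar>t - r\<bar> powr (-3/2)"
    and a1: "1 < \<alpha>" and a2: "\<alpha> \<le> 3/2"
    and n: "1 \<le> n" and aT: "real a + 1 \<le> real n * T" and bT: "real b + 1 \<le> real n * T"
  shows "\<bar>beta M W n a b\<bar> \<le> (\<bar>C1\<bar> + 2*\<bar>C2\<bar>) * real n powr (-1/2) * gfun \<alpha> a b"
proof -
  define s where "s = 1 / real n"
  define t where "t = real (a+1) / real n"
  define r where "r = real (b+1) / real n"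
  have np: "real n > 0" using n by simp
  have sp: "s > 0" unfolding s_def using np by simp
  have ts: "t - s = real a / real n" unfolding t_def s_def using np by (simp add: divide_simps)
  have rs: "r - s = real b / real n" unfolding r_def s_def using np by (simp add: divide_simps)
  have tT: "t \<le> T" unfolding t_def using aT np by (simp add: divide_simps mult.commute)
  have rT: "r \<le> T" unfolding r_def using bT np by (simp add: divide_simps mult.commute)
  have st: "s \<le> t" and sr: "s \<le> r" unfolding s_def t_def r_def using np by (auto simp: divide_simps)
  have beq: "beta M W n a b = (\<integral>\<omega>. (W t \<omega> - W (t - s) \<omega>) * (W r \<omega> - W (r - s) \<omega>) \<partial>M)"
    unfolding ts rs unfolding beta_def t_def r_def by simp
  have spow: "s powr (1/2) = real n powr (-1/2)"
    unfolding s_def using np by (simp add: powr_minus_divide powr_divide)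
  have K0: "0 \<le> \<bar>C1\<bar> + 2*\<bar>C2\<bar>" by simp
  show ?thesis
  proof (cases "a = 0 \<or> b = 0 \<or> \<bar>real a - real b\<bar> \<le> 1")
    case True
    then have g1: "gfun \<alpha> a b = 1" by (simp add: gfun_def)
    have b1: "(\<integral>\<omega>. (W t \<omega> - W (t - s) \<omega>)^2 \<partial>M) \<le> \<bar>C1\<bar> * real n powr (-1/2)"
    proof -
      have "(\<integral>\<omega>. (W t \<omega> - W (t - s) \<omega>)^2 \<partial>M) \<le> C1 * s powr (1/2)"
        using ci sp st tT by blast
      also have "\<dots> \<le> \<bar>C1\<bar> * real n powr (-1/2)" unfolding spow by (intro mult_right_mono) auto
      finally show ?thesis .
    qed
    have b2: "(\<integral>\<omega>. (W r \<omega> - W (r - s) \<omega>)^2 \<partial>M) \<le> \<bar>C1\<bar> * real n powr (-1/2)"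
    proof -
      have "(\<integral>\<omega>. (W r \<omega> - W (r - s) \<omega>)^2 \<partial>M) \<le> C1 * s powr (1/2)"
        using ci sp sr rT by blast
      also have "\<dots> \<le> \<bar>C1\<bar> * real n powr (-1/2)" unfolding spow by (intro mult_right_mono) auto
      finally show ?thesis .
    qed
    have "\<bar>beta M W n a b\<bar> \<le> \<bar>C1\<bar> * real n powr (-1/2)"
      unfolding beq
      by (rule incr_prod_bound[OF G _ _ _ _ b1 b2]) (use sp st sr in auto)
    also have "\<dots> \<le> (\<bar>C1\<bar> + 2*\<bar>C2\<bar>) * real n powr (-1/2)"
      by (intro mult_right_mono) auto
    finally show ?thesis using g1 by simp
  next
    case False
    then have a0: "a \<ge> 1" and b0: "b \<ge> 1" and d1: "\<bar>real a - real b\<bar> > 1" by auto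
    have d2: "\<bar>real a - real b\<bar> \<ge> 2"
    proof (rule ccontr)
      assume "\<not> \<bar>real a - real b\<bar> \<ge> 2"
      then have "a < b + 2" "b < a + 2" by linarith+
      then have "a \<le> b + 1" "b \<le> a + 1" by auto
      then have "\<bar>real a - real b\<bar> \<le> 1" by linarith
      with d1 show False by simp
    qed
    have g: "gfun \<alpha> a b = \<bar>real a - real b\<bar> powr (-\<alpha>)" using False by (simp add: gfun_def)
    have tr: "\<bar>t - r\<bar> = \<bar>real a - real b\<bar> / real n"
    proof -
      have "t - r = (real a - real b) / real n" unfolding t_def r_def using np by (simp add: divide_simps)
      then show ?thesis using np by (simp add: abs_divide)
    qed
    have s2t: "2 * s \<le> t" and s2r: "2 * s \<le> r"
      unfolding s_def t_def r_def using np a0 b0 by (auto simp: divide_simps)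
    have s2d: "\<bar>t - r\<bar> \<ge> 2 * s"
      unfolding tr s_def using np d2 by (simp add: divide_simps)
    have mm: "min t r - s \<ge> 1 / real n"
      using s2t s2r unfolding s_def by auto
    have "\<bar>beta M W n a b\<bar> \<le> C2 * s\<^sup>2 * \<bar>t - r\<bar> powr (-\<alpha>) * (min t r - s) powr (-(3/2 - \<alpha>))
             + C2 * s\<^sup>2 * \<bar>t - r\<bar> powr (-3/2)"
      unfolding beq using cii sp s2t s2r rT tT s2d by blast
    also have "\<dots> \<le> 2*\<bar>C2\<bar> * real n powr (-1/2) * \<bar>real a - real b\<bar> powr (-\<alpha>)"
      unfolding tr s_def by (rule powr_bound) (use n d2 mm a1 a2 s2t s2r in \<open>auto simp: s_def\<close>)
    also have "\<dots> \<le> (\<bar>C1\<bar> + 2*\<bar>C2\<bar>) * real n powr (-1/2) * \<bar>real a - real b\<bar> powr (-\<alpha>)"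
      by (intro mult_right_mono) auto
    finally show ?thesis using g by simp
  qed
qed


lemma term_pow:
  fixes x P g :: real
  assumes "0 \<le> x" "x \<le> P * g" "0 \<le> g" "g \<le> 1" "0 \<le> P" "1 \<le> r"
  shows "x ^ r \<le> P ^ r * g"
proof -
  have "x ^ r \<le> (P * g) ^ r" by (rule power_mono) (use assms in auto)
  also have "\<dots> = P ^ r * g ^ r" by (simp add: power_mult_distrib)
  also have "g ^ r \<le> g ^ 1" by (rule power_decreasing) (use assms in auto)
  then have "P ^ r * g ^ r \<le> P ^ r * g" using assms by (intro mult_left_mono) auto
  finally show ?thesis .
qed

theorem corollary4p2:
  fixes M :: "'a measure" and W :: "real \<Rightarrow> 'a \<Rightarrow> real" and T :: real
  assumes "T > 0"
    and "centered_gaussian_process M W"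
    and "continuous_on ({0..} \<times> {0..}) (\<lambda>(s, t). cov_fun M W s t)"
    and "cond_i M W T"
    and "cond_ii M W T"
  shows "\<forall>r::nat. r \<ge> 1 \<longrightarrow> (\<exists>C::real. \<forall>n::nat. \<forall>t::real. n \<ge> 1 \<and> 0 \<le> t \<and> t \<le> T \<longrightarrow>
     (\<Sum>j\<in>{1..nat \<lfloor>real n * t / 2\<rfloor>}. \<Sum>k\<in>{1..nat \<lfloor>real n * t / 2\<rfloor>}.
        \<bar>beta M W n (2*j-1) (2*k-1)\<bar> ^ r + \<bar>beta M W n (2*j-1) (2*k-2)\<bar> ^ r
      + \<bar>beta M W n (2*j-2) (2*k-1)\<bar> ^ r + \<bar>beta M W n (2*j-2) (2*k-2)\<bar> ^ r)
     \<le> C * real (nat \<lfloor>real n * t / 2\<rfloor>) * real n powr (- real r / 2))"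
proof (intro allI impI)
  fix r :: nat assume r: "r \<ge> 1"
  have G: "centered_gaussian_process M W" by fact
  obtain C1 where ci: "\<forall>s t. 0 < s \<and> s \<le> t \<and> t \<le> T \<longrightarrow>
      (\<integral>\<omega>. (W t \<omega> - W (t - s) \<omega>)\<^sup>2 \<partial>M) \<le> C1 * s powr (1/2)"
    using assms(4) unfolding cond_i_def by blast
  obtain C2 \<alpha> where a1: "1 < \<alpha>" and a2: "\<alpha> \<le> 3/2" and cii: "\<forall>s r t. 0 < s \<and> 2 * s \<le> r \<and> r \<le> T \<and> 2 * s \<le> t \<and> t \<le> T \<and> \<bar>t - r\<bar> \<ge> 2 * s \<longrightarrow>
        \<bar>(\<integral>\<omega>. (W t \<omega> - W (t - s) \<omega>) * (W r \<omega> - W (r - s) \<omega>) \<partial>M)\<bar>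
          \<le> C2 * s\<^sup>2 * \<bar>t - r\<bar> powr (-\<alpha>) * (min t r - s) powr (-(3/2 - \<alpha>))
             + C2 * s\<^sup>2 * \<bar>t - r\<bar> powr (-3/2)"
    using assms(5) unfolding cond_ii_def by blast
  define K where "K = \<bar>C1\<bar> + 2*\<bar>C2\<bar>"
  define c where "c = (2::real) powr \<alpha>"
  define S where "S = (\<Sum>d. (1 + real d) powr (-\<alpha>))"
  define H where "H = (\<lambda>j k::nat. (if j=1 then 1 else 0) + (if k=1 then 1 else 0) + c * (1 + \<bar>real j - real k\<bar>) powr (-\<alpha>))"
  have K0: "0 \<le> K" unfolding K_def by simp
  have c0: "0 \<le> c" unfolding c_def by simp
  show "\<exists>C::real. \<forall>n::nat. \<forall>t::real. n \<ge> 1 \<and> 0 \<le> t \<and> t \<le> T \<longrightarrow>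
     (\<Sum>j\<in>{1..nat \<lfloor>real n * t / 2\<rfloor>}. \<Sum>k\<in>{1..nat \<lfloor>real n * t / 2\<rfloor>}.
        \<bar>beta M W n (2*j-1) (2*k-1)\<bar> ^ r + \<bar>beta M W n (2*j-1) (2*k-2)\<bar> ^ r
      + \<bar>beta M W n (2*j-2) (2*k-1)\<bar> ^ r + \<bar>beta M W n (2*j-2) (2*k-2)\<bar> ^ r)
     \<le> C * real (nat \<lfloor>real n * t / 2\<rfloor>) * real n powr (- real r / 2)"
  proof (intro exI allI impI)
    fix n :: nat and t :: real
    assume nt: "n \<ge> 1 \<and> 0 \<le> t \<and> t \<le> T"
    define N where "N = nat \<lfloor>real n * t / 2\<rfloor>"
    have np: "real n > 0" using nt by simp
    have Nle: "2 * real N \<le> real n * T"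
    proof -
      have "0 \<le> real n * t / 2" using nt by simp
      then have "real N \<le> real n * t / 2" unfolding N_def by linarith
      moreover have "real n * t \<le> real n * T" using nt by (intro mult_left_mono) auto
      ultimately show ?thesis by linarith
    qed
    define P where "P = K ^ r * real n powr (- real r / 2)"
    have P0: "0 \<le> P" unfolding P_def using K0 by simp
    have KP: "(K * real n powr (-1/2)) ^ r = P"
      unfolding P_def using np by (simp add: power_mult_distrib powr_power)
    have tb: "\<bar>beta M W n a b\<bar> ^ r \<le> P * H j k"
      if j: "j \<in> {1..N}" and k: "k \<in> {1..N}" and ab: "a \<in> {2*j-1, 2*j-2}" "b \<in> {2*k-1, 2*k-2}" for j k a b
    proof -
      have aT: "real a + 1 \<le> real n * T"
      proof -
        have "a + 1 \<le> 2 * N" using j ab by auto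
        then have "real a + 1 \<le> 2 * real N" by linarith
        then show ?thesis using Nle by linarith
      qed
      have bT: "real b + 1 \<le> real n * T"
      proof -
        have "b + 1 \<le> 2 * N" using k ab by auto
        then have "real b + 1 \<le> 2 * real N" by linarith
        then show ?thesis using Nle by linarith
      qed
      have bb: "\<bar>beta M W n a b\<bar> \<le> (K * real n powr (-1/2)) * gfun \<alpha> a b"
        using beta_bound[OF G ci cii a1 a2 _ aT bT] nt unfolding K_def by simp
      have "\<bar>beta M W n a b\<bar> ^ r \<le> (K * real n powr (-1/2)) ^ r * gfun \<alpha> a b"
        by (rule term_pow[OF _ bb gfun_nonneg gfun_le1 _ r]) (use a1 K0 in auto)
      also have "\<dots> \<le> P * H j k"
        unfolding KP H_def c_def
        by (intro mult_left_mono[OF g_le_H P0]) (use a1 j k ab in auto)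
      finally show ?thesis .
    qed
    have "(\<Sum>j\<in>{1..N}. \<Sum>k\<in>{1..N}.
        \<bar>beta M W n (2*j-1) (2*k-1)\<bar> ^ r + \<bar>beta M W n (2*j-1) (2*k-2)\<bar> ^ r
      + \<bar>beta M W n (2*j-2) (2*k-1)\<bar> ^ r + \<bar>beta M W n (2*j-2) (2*k-2)\<bar> ^ r)
      \<le> (\<Sum>j\<in>{1..N}. \<Sum>k\<in>{1..N}. 4 * P * H j k)"
    proof (intro sum_mono)
      fix j k assume j: "j \<in> {1..N}" and k: "k \<in> {1..N}"
      show "\<bar>beta M W n (2*j-1) (2*k-1)\<bar> ^ r + \<bar>beta M W n (2*j-1) (2*k-2)\<bar> ^ r
      + \<bar>beta M W n (2*j-2) (2*k-1)\<bar> ^ r + \<bar>beta M W n (2*j-2) (2*k-2)\<bar> ^ r \<le> 4 * P * H j k"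
        using tb[OF j k, of "2*j-1" "2*k-1"] tb[OF j k, of "2*j-1" "2*k-2"]
          tb[OF j k, of "2*j-2" "2*k-1"] tb[OF j k, of "2*j-2" "2*k-2"] by auto
    qed
    also have "\<dots> = 4 * P * (\<Sum>j\<in>{1..N}. \<Sum>k\<in>{1..N}. H j k)"
      by (simp add: sum_distrib_left)
    also have "\<dots> \<le> 4 * P * (real N * (2 + 2 * c * S))"
      unfolding H_def S_def by (intro mult_left_mono H_sum[OF a1 c0]) (use P0 in auto)
    also have "\<dots> = (4 * K ^ r * (2 + 2 * c * S)) * real N * real n powr (- real r / 2)"
      unfolding P_def by (simp add: algebra_simps)
    finally show "(\<Sum>j\<in>{1..nat \<lfloor>real n * t / 2\<rfloor>}. \<Sum>k\<in>{1..nat \<lfloor>real n * t / 2\<rfloor>}.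
        \<bar>beta M W n (2*j-1) (2*k-1)\<bar> ^ r + \<bar>beta M W n (2*j-1) (2*k-2)\<bar> ^ r
      + \<bar>beta M W n (2*j-2) (2*k-1)\<bar> ^ r + \<bar>beta M W n (2*j-2) (2*k-2)\<bar> ^ r)
     \<le> (4 * K ^ r * (2 + 2 * c * S)) * real (nat \<lfloor>real n * t / 2\<rfloor>) * real n powr (- real r / 2)"
      unfolding N_def .
  qed
qed

end
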